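(* In the setting below, suppose the marching-scale functions have the form $u(s,t,q)=l(s)U(t,q)$, $v(s,t,q)=m(s)V(t,q)$, $w(s,t,q)=n(s)W(t,q)$, $x(s,t,q)=p(s)X(t,q)$ with $l,m,n,p,U,V,W,X$ of class $C^1$ and $l(s),m(s),n(s),p(s)\neq0$ for all $s\in[L_1,L_2]$. Then $\mathbf r$ is an isogeodesic of $\mathbf P$ at $(t_0,q_0)$ if and only if $$U(t_0,q_0)=V(t_0,q_0)=W(t_0,q_0)=X(t_0,q_0)=0,\quad \frac{\partial V}{\partial t}(t_0,q_0)=\frac{\partial V}{\partial q}(t_0,q_0)=0,$$ $$\frac{\partial W}{\partial t}(t_0,q_0)\frac{\partial X}{\partial q}(t_0,q_0)-\frac{\partial W}{\partial q}(t_0,q_0)\frac{\partial X}{\partial t}(t_0,q_0)\neq0.$$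
   Context: $\mathbf r:[L_1,L_2]\to\mathbb R^4$ is an arc-length curve with Frenet frame $\{\mathbf T,\mathbf N,\mathbf B_1,\mathbf B_2\}$ (orthonormal, $\mathbf T=\mathbf r'$, $\mathbf T'=k_1\mathbf N$, $\mathbf N'=-k_1\mathbf T+k_2\mathbf B_1$, $\mathbf B_1'=-k_2\mathbf N+k_3\mathbf B_2$, $\mathbf B_2'=-k_3\mathbf B_1$, $k_1>0$), and $\mathbf P(s,t,q)=\mathbf r(s)+u\mathbf T(s)+v\mathbf N(s)+w\mathbf B_1(s)+x\mathbf B_2(s)$ on $[L_1,L_2]\times[T_1,T_2]\times[Q_1,Q_2]$, with $t_0\in[T_1,T_2]$, $q_0\in[Q_1,Q_2]$ fixed. "$\mathbf r$ is an isogeodesic of $\mathbf P$ at $(t_0,q_0)$" means: $\mathbf P(s,t_0,q_0)=\mathbf r(s)$ for all $s$, $\partial_s\mathbf P,\partial_t\mathbf P,\partial_q\mathbf P$ are linearly independent at $(s,t_0,q_0)$, and $\mathbf N(s)$ is parallel to the normal $\partial_s\mathbf P\otimes\partial_t\mathbf P\otimes\partial_q\mathbf P$ (four-dimensional vector product) at $(s,t_0,q_0)$, for all $s$. *)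

theory Defs
  imports "HOL-Analysis.Analysis"
begin

text \<open>Four-dimensional vector product of a, b, c: the unique vector D with
  D \<bullet> y = det(rows y, a, b, c) for all y (cofactor expansion along the first row).\<close>
definition cross4 :: "real^4 \<Rightarrow> real^4 \<Rightarrow> real^4 \<Rightarrow> real^4" where
  "cross4 a b c = (\<chi> i. det ((\<chi> j. if j = 1 then axis i 1 else if j = 2 then a
                                 else if j = 3 then b else c) :: real^4^4))"

definition lin_indep3 :: "real^4 \<Rightarrow> real^4 \<Rightarrow> real^4 \<Rightarrow> bool" where
  "lin_indep3 a b c \<longleftrightarrow>
     (\<forall>\<alpha> \<beta> \<gamma>. \<alpha> *\<^sub>R a + \<beta> *\<^sub>R b + \<gamma> *\<^sub>R c = 0 \<longrightarrow> \<alpha> = 0 \<and> \<beta> = 0 \<and> \<gamma> = 0)"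

definition frenet4 ::
  "(real \<Rightarrow> real^4) \<Rightarrow> (real \<Rightarrow> real^4) \<Rightarrow> (real \<Rightarrow> real^4) \<Rightarrow> (real \<Rightarrow> real^4) \<Rightarrow> (real \<Rightarrow> real^4)
   \<Rightarrow> (real \<Rightarrow> real) \<Rightarrow> (real \<Rightarrow> real) \<Rightarrow> (real \<Rightarrow> real) \<Rightarrow> real \<Rightarrow> real \<Rightarrow> bool" where
  "frenet4 r T N B1 B2 k1 k2 k3 L1 L2 \<longleftrightarrow>
     (\<forall>s\<in>{L1..L2}.
        T s \<bullet> T s = 1 \<and> N s \<bullet> N s = 1 \<and> B1 s \<bullet> B1 s = 1 \<and> B2 s \<bullet> B2 s = 1 \<and>
        T s \<bullet> N s = 0 \<and> T s \<bullet> B1 s = 0 \<and> T s \<bullet> B2 s = 0 \<and>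
        N s \<bullet> B1 s = 0 \<and> N s \<bullet> B2 s = 0 \<and> B1 s \<bullet> B2 s = 0 \<and>
        k1 s > 0 \<and>
        (r has_vector_derivative T s) (at s within {L1..L2}) \<and>
        (T has_vector_derivative (k1 s *\<^sub>R N s)) (at s within {L1..L2}) \<and>
        (N has_vector_derivative (- k1 s *\<^sub>R T s + k2 s *\<^sub>R B1 s)) (at s within {L1..L2}) \<and>
        (B1 has_vector_derivative (- k2 s *\<^sub>R N s + k3 s *\<^sub>R B2 s)) (at s within {L1..L2}) \<and>
        (B2 has_vector_derivative (- k3 s *\<^sub>R B1 s)) (at s within {L1..L2}))"

definition marchP ::
  "(real \<Rightarrow> real^4) \<Rightarrow> (real \<Rightarrow> real^4) \<Rightarrow> (real \<Rightarrow> real^4) \<Rightarrow> (real \<Rightarrow> real^4) \<Rightarrow> (real \<Rightarrow> real^4)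
   \<Rightarrow> (real \<Rightarrow> real \<Rightarrow> real \<Rightarrow> real) \<Rightarrow> (real \<Rightarrow> real \<Rightarrow> real \<Rightarrow> real)
   \<Rightarrow> (real \<Rightarrow> real \<Rightarrow> real \<Rightarrow> real) \<Rightarrow> (real \<Rightarrow> real \<Rightarrow> real \<Rightarrow> real)
   \<Rightarrow> real \<Rightarrow> real \<Rightarrow> real \<Rightarrow> real^4" where
  "marchP r T N B1 B2 u v w x s t q =
     r s + u s t q *\<^sub>R T s + v s t q *\<^sub>R N s + w s t q *\<^sub>R B1 s + x s t q *\<^sub>R B2 s"

definition isogeodesic ::
  "(real \<Rightarrow> real^4) \<Rightarrow> (real \<Rightarrow> real^4) \<Rightarrow> (real \<Rightarrow> real \<Rightarrow> real \<Rightarrow> real^4)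
   \<Rightarrow> real \<Rightarrow> real \<Rightarrow> real \<Rightarrow> real \<Rightarrow> real \<Rightarrow> real \<Rightarrow> real \<Rightarrow> real \<Rightarrow> bool" where
  "isogeodesic r N P L1 L2 T1 T2 Q1 Q2 t0 q0 \<longleftrightarrow>
     (\<forall>s\<in>{L1..L2}.
        P s t0 q0 = r s \<and>
        (let Ps = vector_derivative (\<lambda>s'. P s' t0 q0) (at s within {L1..L2});
             Pt = vector_derivative (\<lambda>t. P s t q0) (at t0 within {T1..T2});
             Pq = vector_derivative (\<lambda>q. P s t0 q) (at q0 within {Q1..Q2})
         in lin_indep3 Ps Pt Pq \<and> (\<exists>c. cross4 Ps Pt Pq = c *\<^sub>R N s)))"

definition C1_on :: "real set \<Rightarrow> (real \<Rightarrow> real) \<Rightarrow> bool" where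
  "C1_on S f \<longleftrightarrow> (\<exists>D. (\<forall>z\<in>S. (f has_field_derivative D z) (at z within S)) \<and> continuous_on S D)"

definition C1_on2 :: "(real \<times> real) set \<Rightarrow> (real \<Rightarrow> real \<Rightarrow> real) \<Rightarrow> bool" where
  "C1_on2 S f \<longleftrightarrow> (\<exists>D :: real \<times> real \<Rightarrow> (real \<times> real) \<Rightarrow>\<^sub>L real.
      (\<forall>z\<in>S. ((\<lambda>y. f (fst y) (snd y)) has_derivative blinfun_apply (D z)) (at z within S))
      \<and> continuous_on S D)"

end

theory Submission
  imports Defs
begin
lemma det_4:
  "det (A::'a::comm_ring_1^4^4) =
   A$1$1*A$2$2*A$3$3*A$4$4 - A$1$1*A$2$2*A$3$4*A$4$3 - A$1$1*A$2$3*A$3$2*A$4$4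
 + A$1$1*A$2$3*A$3$4*A$4$2 + A$1$1*A$2$4*A$3$2*A$4$3 - A$1$1*A$2$4*A$3$3*A$4$2
 - A$1$2*A$2$1*A$3$3*A$4$4 + A$1$2*A$2$1*A$3$4*A$4$3 + A$1$2*A$2$3*A$3$1*A$4$4
 - A$1$2*A$2$3*A$3$4*A$4$1 - A$1$2*A$2$4*A$3$1*A$4$3 + A$1$2*A$2$4*A$3$3*A$4$1
 + A$1$3*A$2$1*A$3$2*A$4$4 - A$1$3*A$2$1*A$3$4*A$4$2 - A$1$3*A$2$2*A$3$1*A$4$4
 + A$1$3*A$2$2*A$3$4*A$4$1 + A$1$3*A$2$4*A$3$1*A$4$2 - A$1$3*A$2$4*A$3$2*A$4$1
 - A$1$4*A$2$1*A$3$2*A$4$3 + A$1$4*A$2$1*A$3$3*A$4$2 + A$1$4*A$2$2*A$3$1*A$4$3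
 - A$1$4*A$2$2*A$3$3*A$4$1 - A$1$4*A$2$3*A$3$1*A$4$2 + A$1$4*A$2$3*A$3$2*A$4$1"
proof -
  have f1: "finite {2::4, 3, 4}" "1 \<notin> {2::4, 3, 4}" by auto
  have f2: "finite {3::4, 4}" "2 \<notin> {3::4, 4}" by auto
  have f3: "finite {4::4}" "3 \<notin> {4::4}" by auto
  show ?thesis
    unfolding det_def UNIV_4
    unfolding sum_over_permutations_insert[OF f1]
    unfolding sum_over_permutations_insert[OF f2]
    unfolding sum_over_permutations_insert[OF f3]
    unfolding permutes_sing
    by (simp add: sign_swap_id permutation_swap_id sign_compose permutation_compose sign_id swap_id_eq algebra_simps)
qed
lemma mult_transpose_entry: "((R::real^4^4) ** transpose F) $ i $ j = R$i \<bullet> F$j"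
  by (simp add: matrix_matrix_mult_def transpose_def inner_vec_def mult.commute)

lemma cross4_inner: "cross4 a b c \<bullet> y = det ((\<chi> j. if j = 1 then y else if j = 2 then a
                                 else if j = 3 then b else c) :: real^4^4)"
  by (simp add: cross4_def inner_vec_def sum_4 det_4 axis_def algebra_simps)

lemma frame_key:
  fixes e1 e2 e3 e4 :: "real^4" and a b c d a' b' c' d' :: real
  assumes o: "e1 \<bullet> e1 = 1" "e2 \<bullet> e2 = 1" "e3 \<bullet> e3 = 1" "e4 \<bullet> e4 = 1"
    "e1 \<bullet> e2 = 0" "e1 \<bullet> e3 = 0" "e1 \<bullet> e4 = 0" "e2 \<bullet> e3 = 0" "e2 \<bullet> e4 = 0" "e3 \<bullet> e4 = 0"
  defines "Pt \<equiv> a *\<^sub>R e1 + b *\<^sub>R e2 + c *\<^sub>R e3 + d *\<^sub>R e4"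
    and "Pq \<equiv> a' *\<^sub>R e1 + b' *\<^sub>R e2 + c' *\<^sub>R e3 + d' *\<^sub>R e4"
  shows "(lin_indep3 e1 Pt Pq \<and> (\<exists>k. cross4 e1 Pt Pq = k *\<^sub>R e2)) \<longleftrightarrow>
          b = 0 \<and> b' = 0 \<and> c * d' - d * c' \<noteq> 0"
proof -
  have o': "e2 \<bullet> e1 = 0" "e3 \<bullet> e1 = 0" "e4 \<bullet> e1 = 0" "e3 \<bullet> e2 = 0" "e4 \<bullet> e2 = 0" "e4 \<bullet> e3 = 0"
    using o by (simp_all add: inner_commute)
  define F :: "real^4^4" where "F = (\<chi> i. if i = 1 then e1 else if i = 2 then e2 else if i = 3 then e3 else e4)"
  have F: "F$1 = e1" "F$2 = e2" "F$3 = e3" "F$4 = e4" by (simp_all add: F_def)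
  have FF: "F ** transpose F = mat 1"
    by (simp add: vec_eq_iff forall_4 mult_transpose_entry F o o' mat_def)
  have "det F * det F = 1"
    using arg_cong[OF FF, of det] by (simp add: det_mul det_transpose)
  then have dF: "det F \<noteq> 0" by auto
  have FtF: "transpose F ** F = mat 1"
    using FF matrix_left_right_inverse by blast
  have zero4: "A1 *\<^sub>R e1 + A2 *\<^sub>R e2 + A3 *\<^sub>R e3 + A4 *\<^sub>R e4 = 0 \<longleftrightarrow> A1 = 0 \<and> A2 = 0 \<and> A3 = 0 \<and> A4 = 0"
    for A1 A2 A3 A4
  proof
    assume h: "A1 *\<^sub>R e1 + A2 *\<^sub>R e2 + A3 *\<^sub>R e3 + A4 *\<^sub>R e4 = 0"
    have "(A1 *\<^sub>R e1 + A2 *\<^sub>R e2 + A3 *\<^sub>R e3 + A4 *\<^sub>R e4) \<bullet> e1 = 0"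
         "(A1 *\<^sub>R e1 + A2 *\<^sub>R e2 + A3 *\<^sub>R e3 + A4 *\<^sub>R e4) \<bullet> e2 = 0"
         "(A1 *\<^sub>R e1 + A2 *\<^sub>R e2 + A3 *\<^sub>R e3 + A4 *\<^sub>R e4) \<bullet> e3 = 0"
         "(A1 *\<^sub>R e1 + A2 *\<^sub>R e2 + A3 *\<^sub>R e3 + A4 *\<^sub>R e4) \<bullet> e4 = 0"
      using h by simp_all
    then show "A1 = 0 \<and> A2 = 0 \<and> A3 = 0 \<and> A4 = 0"
      by (simp_all add: inner_add_left o o')
  qed simp
  have lin: "lin_indep3 e1 Pt Pq \<longleftrightarrow>
     (\<forall>\<alpha> \<beta> \<gamma>. (\<alpha> + \<beta>*a + \<gamma>*a' = 0 \<and> \<beta>*b + \<gamma>*b' = 0 \<and> \<beta>*c + \<gamma>*c' = 0 \<and> \<beta>*d + \<gamma>*d' = 0)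
        \<longrightarrow> \<alpha> = 0 \<and> \<beta> = 0 \<and> \<gamma> = 0)"
  proof -
    have "\<alpha> *\<^sub>R e1 + \<beta> *\<^sub>R Pt + \<gamma> *\<^sub>R Pq =
       (\<alpha> + \<beta>*a + \<gamma>*a') *\<^sub>R e1 + (\<beta>*b + \<gamma>*b') *\<^sub>R e2 + (\<beta>*c + \<gamma>*c') *\<^sub>R e3 + (\<beta>*d + \<gamma>*d') *\<^sub>R e4"
      for \<alpha> \<beta> \<gamma>
      by (simp add: Pt_def Pq_def algebra_simps)
    then show ?thesis unfolding lin_indep3_def using zero4 by simp
  qed
  let ?D = "cross4 e1 Pt Pq"
  have Dj: "?D \<bullet> y * det F = det (\<chi> i j. (if i = 1 then y else if i = 2 then e1
                                 else if i = 3 then Pt else Pq) \<bullet> F$j)" for y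
  proof -
    let ?R = "(\<chi> j. if j = 1 then y else if j = 2 then e1 else if j = 3 then Pt else Pq) :: real^4^4"
    have "?R ** transpose F = (\<chi> i j. (if i = 1 then y else if i = 2 then e1
                                 else if i = 3 then Pt else Pq) \<bullet> F$j)"
      by (simp add: vec_eq_iff mult_transpose_entry)
    moreover have "det (?R ** transpose F) = det ?R * det F"
      by (simp add: det_mul det_transpose)
    ultimately show ?thesis using cross4_inner[of e1 Pt Pq y] by simp
  qed
  have D3: "?D \<bullet> e3 * det F = b * d' - d * b'"
    unfolding Dj by (simp add: det_4 F o o' Pt_def Pq_def inner_add_left)
  have D4: "?D \<bullet> e4 * det F = c * b' - b * c'"
    unfolding Dj by (simp add: det_4 F o o' Pt_def Pq_def inner_add_left)
  have D1: "?D \<bullet> e1 * det F = 0"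
    unfolding Dj by (simp add: det_4 F o o' Pt_def Pq_def inner_add_left)
  show ?thesis
  proof
    assume h: "lin_indep3 e1 Pt Pq \<and> (\<exists>k. cross4 e1 Pt Pq = k *\<^sub>R e2)"
    then obtain k where k: "?D = k *\<^sub>R e2" by blast
    have z3: "?D \<bullet> e3 = 0" unfolding k by (simp add: o(8))
    have z4: "?D \<bullet> e4 = 0" unfolding k by (simp add: o(9))
    have m3: "b * d' = d * b'" using D3 unfolding z3 by linarith
    have m4: "b * c' = c * b'" using D4 unfolding z4 by linarith
    have L: "\<And>\<alpha> \<beta> \<gamma>. \<alpha> + \<beta>*a + \<gamma>*a' = 0 \<Longrightarrow> \<beta>*b + \<gamma>*b' = 0 \<Longrightarrow> \<beta>*c + \<gamma>*c' = 0 \<Longrightarrow> \<beta>*d + \<gamma>*d' = 0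
        \<Longrightarrow> \<beta> = 0 \<and> \<gamma> = 0"
    proof -
      have "\<forall>\<alpha> \<beta> \<gamma>. (\<alpha> + \<beta>*a + \<gamma>*a' = 0 \<and> \<beta>*b + \<gamma>*b' = 0 \<and> \<beta>*c + \<gamma>*c' = 0 \<and> \<beta>*d + \<gamma>*d' = 0)
        \<longrightarrow> \<alpha> = 0 \<and> \<beta> = 0 \<and> \<gamma> = 0" using iffD1[OF lin] h by blast
      then show "\<And>\<alpha> \<beta> \<gamma>. \<alpha> + \<beta>*a + \<gamma>*a' = 0 \<Longrightarrow> \<beta>*b + \<gamma>*b' = 0 \<Longrightarrow> \<beta>*c + \<gamma>*c' = 0 \<Longrightarrow> \<beta>*d + \<gamma>*d' = 0
        \<Longrightarrow> \<beta> = 0 \<and> \<gamma> = 0" by blast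
    qed
    have bb: "b = 0 \<and> b' = 0"
    proof (rule ccontr)
      assume nb: "\<not> (b = 0 \<and> b' = 0)"
      have q1: "- (b'*a + (-b)*a') + b'*a + (-b)*a' = 0" by simp
      have q2: "b'*b + (-b)*b' = 0" by simp
      have q3: "b'*c + (-b)*c' = 0" using m4 by (simp add: mult.commute)
      have q4: "b'*d + (-b)*d' = 0" using m3 by (simp add: mult.commute)
      have "b' = 0 \<and> - b = 0" by (rule L[OF q1 q2 q3 q4])
      then show False using nb by simp
    qed
    have "c * d' - d * c' \<noteq> 0"
    proof
      assume z: "c * d' - d * c' = 0"
      have q1: "- (c'*a + (-c)*a') + c'*a + (-c)*a' = 0" by simp
      have q2: "c'*b + (-c)*b' = 0" using bb by simp
      have q3: "c'*c + (-c)*c' = 0" by simp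
      have q4: "c'*d + (-c)*d' = 0" using z by (simp add: mult.commute)
      have cc: "c' = 0 \<and> - c = 0" by (rule L[OF q1 q2 q3 q4])
      have r1: "- (d'*a + (-d)*a') + d'*a + (-d)*a' = 0" by simp
      have r2: "d'*b + (-d)*b' = 0" using bb by simp
      have r3: "d'*c + (-d)*c' = 0" using cc by simp
      have r4: "d'*d + (-d)*d' = 0" by simp
      have dd: "d' = 0 \<and> - d = 0" by (rule L[OF r1 r2 r3 r4])
      have s1: "- a + 1*a + 0*a' = 0" by simp
      have s2: "1*b + 0*b' = 0" using bb by simp
      have s3: "1*c + 0*c' = 0" using cc by simp
      have s4: "1*d + 0*d' = 0" using dd by simp
      have "(1::real) = 0 \<and> (0::real) = 0" by (rule L[OF s1 s2 s3 s4])
      then show False by simp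
    qed
    with bb show "b = 0 \<and> b' = 0 \<and> c * d' - d * c' \<noteq> 0" by blast
  next
    assume h: "b = 0 \<and> b' = 0 \<and> c * d' - d * c' \<noteq> 0"
    have "lin_indep3 e1 Pt Pq"
      unfolding lin
    proof (intro allI impI)
      fix \<alpha> \<beta> \<gamma>
      assume e: "\<alpha> + \<beta>*a + \<gamma>*a' = 0 \<and> \<beta>*b + \<gamma>*b' = 0 \<and> \<beta>*c + \<gamma>*c' = 0 \<and> \<beta>*d + \<gamma>*d' = 0"
      have "\<beta> * (c * d' - d * c') = (\<beta>*c + \<gamma>*c') * d' - (\<beta>*d + \<gamma>*d') * c'" by (simp add: algebra_simps)
      then have b0: "\<beta> = 0" using e h by simp
      have "\<gamma> * (c * d' - d * c') = (\<beta>*d + \<gamma>*d') * c - (\<beta>*c + \<gamma>*c') * d" by (simp add: algebra_simps)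
      then have g0: "\<gamma> = 0" using e h by simp
      show "\<alpha> = 0 \<and> \<beta> = 0 \<and> \<gamma> = 0" using e b0 g0 by simp
    qed
    moreover have "?D = (?D \<bullet> e2) *\<^sub>R e2"
    proof -
      define z where "z = ?D - (?D \<bullet> e2) *\<^sub>R e2"
      have i1: "?D \<bullet> e1 = 0" using D1 dF by simp
      have i3: "?D \<bullet> e3 = 0" using D3 dF h by simp
      have i4: "?D \<bullet> e4 = 0" using D4 dF h by simp
      have "F *v z = 0"
        by (simp add: vec_eq_iff forall_4 matrix_vector_mul_component F z_def inner_diff_right
            o o' i1 i3 i4 inner_commute[of _ "cross4 e1 Pt Pq"])
      then have "z = 0"
      proof -
        have "z = (transpose F ** F) *v z" by (simp add: FtF)
        also have "\<dots> = transpose F *v (F *v z)" by (simp add: matrix_vector_mul_assoc)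
        also have "\<dots> = 0" using \<open>F *v z = 0\<close> by simp
        finally show ?thesis .
      qed
      then show ?thesis by (simp add: z_def)
    qed
    ultimately show "lin_indep3 e1 Pt Pq \<and> (\<exists>k. cross4 e1 Pt Pq = k *\<^sub>R e2)" by blast
  qed
qed

lemma frame_zero:
  fixes e1 e2 e3 e4 :: "real^4"
  assumes o: "e1 \<bullet> e1 = 1" "e2 \<bullet> e2 = 1" "e3 \<bullet> e3 = 1" "e4 \<bullet> e4 = 1"
    "e1 \<bullet> e2 = 0" "e1 \<bullet> e3 = 0" "e1 \<bullet> e4 = 0" "e2 \<bullet> e3 = 0" "e2 \<bullet> e4 = 0" "e3 \<bullet> e4 = 0"
  shows "A1 *\<^sub>R e1 + A2 *\<^sub>R e2 + A3 *\<^sub>R e3 + A4 *\<^sub>R e4 = 0 \<longleftrightarrow> A1 = 0 \<and> A2 = 0 \<and> A3 = 0 \<and> A4 = 0"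
proof
  have o': "e2 \<bullet> e1 = 0" "e3 \<bullet> e1 = 0" "e4 \<bullet> e1 = 0" "e3 \<bullet> e2 = 0" "e4 \<bullet> e2 = 0" "e4 \<bullet> e3 = 0"
    using o by (simp_all add: inner_commute)
  assume h: "A1 *\<^sub>R e1 + A2 *\<^sub>R e2 + A3 *\<^sub>R e3 + A4 *\<^sub>R e4 = 0"
  have "(A1 *\<^sub>R e1 + A2 *\<^sub>R e2 + A3 *\<^sub>R e3 + A4 *\<^sub>R e4) \<bullet> e1 = 0"
       "(A1 *\<^sub>R e1 + A2 *\<^sub>R e2 + A3 *\<^sub>R e3 + A4 *\<^sub>R e4) \<bullet> e2 = 0"
       "(A1 *\<^sub>R e1 + A2 *\<^sub>R e2 + A3 *\<^sub>R e3 + A4 *\<^sub>R e4) \<bullet> e3 = 0"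
       "(A1 *\<^sub>R e1 + A2 *\<^sub>R e2 + A3 *\<^sub>R e3 + A4 *\<^sub>R e4) \<bullet> e4 = 0"
    using h by simp_all
  then show "A1 = 0 \<and> A2 = 0 \<and> A3 = 0 \<and> A4 = 0"
    by (simp_all add: inner_add_left o o')
qed simp

lemma partial_t:
  assumes "C1_on2 ({T1..T2} \<times> {Q1..Q2}) U" "t0 \<in> {T1..T2}" "q0 \<in> {Q1..Q2}"
  shows "((\<lambda>t. U t q0) has_field_derivative vector_derivative (\<lambda>t. U t q0) (at t0 within {T1..T2})) (at t0 within {T1..T2})"
proof -
  obtain D where D: "\<forall>z\<in>{T1..T2} \<times> {Q1..Q2}. ((\<lambda>y. U (fst y) (snd y)) has_derivative blinfun_apply (D z)) (at z within {T1..T2} \<times> {Q1..Q2})"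
    using assms(1) unfolding C1_on2_def by blast
  have h1: "((\<lambda>y. U (fst y) (snd y)) has_derivative blinfun_apply (D (t0,q0))) (at (t0,q0) within {T1..T2} \<times> {Q1..Q2})"
    using D assms by auto
  have h2: "((\<lambda>t. (t, q0)) has_derivative (\<lambda>h. (h, 0))) (at t0 within {T1..T2})"
    by (auto intro!: derivative_eq_intros)
  have sub: "(\<lambda>t. (t, q0)) ` {T1..T2} \<subseteq> {T1..T2} \<times> {Q1..Q2}" using assms by auto
  have "(((\<lambda>y. U (fst y) (snd y)) \<circ> (\<lambda>t. (t, q0))) has_derivative (blinfun_apply (D (t0,q0)) \<circ> (\<lambda>h. (h, 0)))) (at t0 within {T1..T2})"
    by (rule diff_chain_within[OF h2 has_derivative_subset[OF _ sub]]) (use h1 in simp)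
  then have "(\<lambda>t. U t q0) differentiable (at t0 within {T1..T2})"
    unfolding differentiable_def o_def by auto
  then show ?thesis
    using vector_derivative_works has_real_derivative_iff_has_vector_derivative by blast
qed

lemma partial_q:
  assumes "C1_on2 ({T1..T2} \<times> {Q1..Q2}) U" "t0 \<in> {T1..T2}" "q0 \<in> {Q1..Q2}"
  shows "((\<lambda>q. U t0 q) has_field_derivative vector_derivative (\<lambda>q. U t0 q) (at q0 within {Q1..Q2})) (at q0 within {Q1..Q2})"
proof -
  obtain D where D: "\<forall>z\<in>{T1..T2} \<times> {Q1..Q2}. ((\<lambda>y. U (fst y) (snd y)) has_derivative blinfun_apply (D z)) (at z within {T1..T2} \<times> {Q1..Q2})"
    using assms(1) unfolding C1_on2_def by blast
  have h1: "((\<lambda>y. U (fst y) (snd y)) has_derivative blinfun_apply (D (t0,q0))) (at (t0,q0) within {T1..T2} \<times> {Q1..Q2})"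
    using D assms by auto
  have h2: "((\<lambda>q. (t0, q)) has_derivative (\<lambda>h. (0, h))) (at q0 within {Q1..Q2})"
    by (auto intro!: derivative_eq_intros)
  have sub: "(\<lambda>q. (t0, q)) ` {Q1..Q2} \<subseteq> {T1..T2} \<times> {Q1..Q2}" using assms by auto
  have "(((\<lambda>y. U (fst y) (snd y)) \<circ> (\<lambda>q. (t0, q))) has_derivative (blinfun_apply (D (t0,q0)) \<circ> (\<lambda>h. (0, h)))) (at q0 within {Q1..Q2})"
    by (rule diff_chain_within[OF h2 has_derivative_subset[OF _ sub]]) (use h1 in simp)
  then have "(\<lambda>q. U t0 q) differentiable (at q0 within {Q1..Q2})"
    unfolding differentiable_def o_def by auto
  then show ?thesis
    using vector_derivative_works has_real_derivative_iff_has_vector_derivative by blast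
qed

lemma comb_deriv:
  fixes r0 e1 e2 e3 e4 :: "real^4"
  assumes "(fu has_field_derivative du) (at x within S)" "(fv has_field_derivative dv) (at x within S)"
    "(fw has_field_derivative dw) (at x within S)" "(fx has_field_derivative dx) (at x within S)"
  shows "((\<lambda>t. r0 + (a1 * fu t) *\<^sub>R e1 + (a2 * fv t) *\<^sub>R e2 + (a3 * fw t) *\<^sub>R e3 + (a4 * fx t) *\<^sub>R e4)
     has_vector_derivative ((a1*du) *\<^sub>R e1 + (a2*dv) *\<^sub>R e2 + (a3*dw) *\<^sub>R e3 + (a4*dx) *\<^sub>R e4)) (at x within S)"
proof -
  have "((\<lambda>t. r0 + (a1 * fu t) *\<^sub>R e1 + (a2 * fv t) *\<^sub>R e2 + (a3 * fw t) *\<^sub>R e3 + (a4 * fx t) *\<^sub>R e4)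
     has_vector_derivative (0 + ((a1 * fu x) *\<^sub>R 0 + (a1*du) *\<^sub>R e1) + ((a2 * fv x) *\<^sub>R 0 + (a2*dv) *\<^sub>R e2)
       + ((a3 * fw x) *\<^sub>R 0 + (a3*dw) *\<^sub>R e3) + ((a4 * fx x) *\<^sub>R 0 + (a4*dx) *\<^sub>R e4))) (at x within S)"
    by (intro has_vector_derivative_add has_vector_derivative_scaleR has_vector_derivative_const DERIV_cmult assms)
  then show ?thesis by simp
qed

theorem mainTheorem2:
  fixes r T N B1 B2 :: "real \<Rightarrow> real^4"
    and k1 k2 k3 l m n p :: "real \<Rightarrow> real"
    and U V W X :: "real \<Rightarrow> real \<Rightarrow> real"
    and L1 L2 T1 T2 Q1 Q2 t0 q0 :: real
  assumes "L1 < L2" "T1 < T2" "Q1 < Q2"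
    and "t0 \<in> {T1..T2}" "q0 \<in> {Q1..Q2}"
    and "frenet4 r T N B1 B2 k1 k2 k3 L1 L2"
    and "C1_on {L1..L2} l" "C1_on {L1..L2} m" "C1_on {L1..L2} n" "C1_on {L1..L2} p"
    and "C1_on2 ({T1..T2} \<times> {Q1..Q2}) U" "C1_on2 ({T1..T2} \<times> {Q1..Q2}) V"
        "C1_on2 ({T1..T2} \<times> {Q1..Q2}) W" "C1_on2 ({T1..T2} \<times> {Q1..Q2}) X"
    and "\<forall>s\<in>{L1..L2}. l s \<noteq> 0 \<and> m s \<noteq> 0 \<and> n s \<noteq> 0 \<and> p s \<noteq> 0"
  shows "isogeodesic r N
           (marchP r T N B1 B2 (\<lambda>s t q. l s * U t q) (\<lambda>s t q. m s * V t q)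
                               (\<lambda>s t q. n s * W t q) (\<lambda>s t q. p s * X t q))
           L1 L2 T1 T2 Q1 Q2 t0 q0
         \<longleftrightarrow>
         (U t0 q0 = 0 \<and> V t0 q0 = 0 \<and> W t0 q0 = 0 \<and> X t0 q0 = 0 \<and>
          vector_derivative (\<lambda>t. V t q0) (at t0 within {T1..T2}) = 0 \<and>
          vector_derivative (\<lambda>q. V t0 q) (at q0 within {Q1..Q2}) = 0 \<and>
          vector_derivative (\<lambda>t. W t q0) (at t0 within {T1..T2})
            * vector_derivative (\<lambda>q. X t0 q) (at q0 within {Q1..Q2})
          - vector_derivative (\<lambda>q. W t0 q) (at q0 within {Q1..Q2})
            * vector_derivative (\<lambda>t. X t q0) (at t0 within {T1..T2}) \<noteq> 0)"
proof -
  note A = assms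
  define P where "P = marchP r T N B1 B2 (\<lambda>s t q. l s * U t q) (\<lambda>s t q. m s * V t q)
                               (\<lambda>s t q. n s * W t q) (\<lambda>s t q. p s * X t q)"
  define Ut where "Ut = vector_derivative (\<lambda>t. U t q0) (at t0 within {T1..T2})"
  define Vt where "Vt = vector_derivative (\<lambda>t. V t q0) (at t0 within {T1..T2})"
  define Wt where "Wt = vector_derivative (\<lambda>t. W t q0) (at t0 within {T1..T2})"
  define Xt where "Xt = vector_derivative (\<lambda>t. X t q0) (at t0 within {T1..T2})"
  define Uq where "Uq = vector_derivative (\<lambda>q. U t0 q) (at q0 within {Q1..Q2})"
  define Vq where "Vq = vector_derivative (\<lambda>q. V t0 q) (at q0 within {Q1..Q2})"
  define Wq where "Wq = vector_derivative (\<lambda>q. W t0 q) (at q0 within {Q1..Q2})"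
  define Xq where "Xq = vector_derivative (\<lambda>q. X t0 q) (at q0 within {Q1..Q2})"
  have dt: "((\<lambda>t. U t q0) has_field_derivative Ut) (at t0 within {T1..T2})"
    "((\<lambda>t. V t q0) has_field_derivative Vt) (at t0 within {T1..T2})"
    "((\<lambda>t. W t q0) has_field_derivative Wt) (at t0 within {T1..T2})"
    "((\<lambda>t. X t q0) has_field_derivative Xt) (at t0 within {T1..T2})"
    unfolding Ut_def Vt_def Wt_def Xt_def using partial_t A(4,5,11-14) by blast+
  have dq: "((\<lambda>q. U t0 q) has_field_derivative Uq) (at q0 within {Q1..Q2})"
    "((\<lambda>q. V t0 q) has_field_derivative Vq) (at q0 within {Q1..Q2})"
    "((\<lambda>q. W t0 q) has_field_derivative Wq) (at q0 within {Q1..Q2})"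
    "((\<lambda>q. X t0 q) has_field_derivative Xq) (at q0 within {Q1..Q2})"
    unfolding Uq_def Vq_def Wq_def Xq_def using partial_q A(4,5,11-14) by blast+
  define R where "R = (U t0 q0 = 0 \<and> V t0 q0 = 0 \<and> W t0 q0 = 0 \<and> X t0 q0 = 0 \<and>
          Vt = 0 \<and> Vq = 0 \<and> Wt * Xq - Wq * Xt \<noteq> 0)"
  have key: "(P s t0 q0 = r s \<and>
        (let Ps = vector_derivative (\<lambda>s'. P s' t0 q0) (at s within {L1..L2});
             Pt = vector_derivative (\<lambda>t. P s t q0) (at t0 within {T1..T2});
             Pq = vector_derivative (\<lambda>q. P s t0 q) (at q0 within {Q1..Q2})
         in lin_indep3 Ps Pt Pq \<and> (\<exists>c. cross4 Ps Pt Pq = c *\<^sub>R N s))) \<longleftrightarrow> R"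
    if s: "s \<in> {L1..L2}" for s
  proof -
    have fr: "T s \<bullet> T s = 1" "N s \<bullet> N s = 1" "B1 s \<bullet> B1 s = 1" "B2 s \<bullet> B2 s = 1"
        "T s \<bullet> N s = 0" "T s \<bullet> B1 s = 0" "T s \<bullet> B2 s = 0"
        "N s \<bullet> B1 s = 0" "N s \<bullet> B2 s = 0" "B1 s \<bullet> B2 s = 0"
      and rT: "(r has_vector_derivative T s) (at s within {L1..L2})"
      using A(6) s unfolding frenet4_def by auto
    have nz: "l s \<noteq> 0" "m s \<noteq> 0" "n s \<noteq> 0" "p s \<noteq> 0" using A(15) s by auto
    have E1: "P s t0 q0 = r s \<longleftrightarrow> U t0 q0 = 0 \<and> V t0 q0 = 0 \<and> W t0 q0 = 0 \<and> X t0 q0 = 0"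
    proof -
      have "P s t0 q0 = r s \<longleftrightarrow> (l s * U t0 q0) *\<^sub>R T s + (m s * V t0 q0) *\<^sub>R N s + (n s * W t0 q0) *\<^sub>R B1 s + (p s * X t0 q0) *\<^sub>R B2 s = 0"
        unfolding P_def marchP_def by (simp add: add.assoc)
      also have "\<dots> \<longleftrightarrow> U t0 q0 = 0 \<and> V t0 q0 = 0 \<and> W t0 q0 = 0 \<and> X t0 q0 = 0"
        using frame_zero[OF fr] nz by simp
      finally show ?thesis .
    qed
    have Pt: "vector_derivative (\<lambda>t. P s t q0) (at t0 within {T1..T2}) =
       (l s * Ut) *\<^sub>R T s + (m s * Vt) *\<^sub>R N s + (n s * Wt) *\<^sub>R B1 s + (p s * Xt) *\<^sub>R B2 s"
      apply (rule vector_derivative_within_closed_interval[OF A(2) A(4)])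
      unfolding P_def marchP_def by (rule comb_deriv[OF dt])
    have Pq: "vector_derivative (\<lambda>q. P s t0 q) (at q0 within {Q1..Q2}) =
       (l s * Uq) *\<^sub>R T s + (m s * Vq) *\<^sub>R N s + (n s * Wq) *\<^sub>R B1 s + (p s * Xq) *\<^sub>R B2 s"
      apply (rule vector_derivative_within_closed_interval[OF A(3) A(5)])
      unfolding P_def marchP_def by (rule comb_deriv[OF dq])
    show ?thesis
    proof (cases "U t0 q0 = 0 \<and> V t0 q0 = 0 \<and> W t0 q0 = 0 \<and> X t0 q0 = 0")
      case False
      then show ?thesis using E1 R_def by auto
    next
      case True
      have "(\<lambda>s'. P s' t0 q0) = r" using True unfolding P_def marchP_def by auto
      then have Ps: "vector_derivative (\<lambda>s'. P s' t0 q0) (at s within {L1..L2}) = T s"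
        using vector_derivative_within_closed_interval[OF A(1) s rT] by simp
      have FK: "(lin_indep3 (T s) ((l s * Ut) *\<^sub>R T s + (m s * Vt) *\<^sub>R N s + (n s * Wt) *\<^sub>R B1 s + (p s * Xt) *\<^sub>R B2 s)
            ((l s * Uq) *\<^sub>R T s + (m s * Vq) *\<^sub>R N s + (n s * Wq) *\<^sub>R B1 s + (p s * Xq) *\<^sub>R B2 s) \<and>
          (\<exists>k. cross4 (T s) ((l s * Ut) *\<^sub>R T s + (m s * Vt) *\<^sub>R N s + (n s * Wt) *\<^sub>R B1 s + (p s * Xt) *\<^sub>R B2 s)
            ((l s * Uq) *\<^sub>R T s + (m s * Vq) *\<^sub>R N s + (n s * Wq) *\<^sub>R B1 s + (p s * Xq) *\<^sub>R B2 s) = k *\<^sub>R N s))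
          \<longleftrightarrow> m s * Vt = 0 \<and> m s * Vq = 0 \<and> (n s * Wt) * (p s * Xq) - (p s * Xt) * (n s * Wq) \<noteq> 0"
        by (rule frame_key[OF fr])
      have alg: "(n s * Wt) * (p s * Xq) - (p s * Xt) * (n s * Wq) = (n s * p s) * (Wt * Xq - Wq * Xt)"
        by (simp add: algebra_simps)
      show ?thesis
        unfolding Let_def Ps Pt Pq FK alg R_def using True E1 nz by simp
    qed
  qed
  have ne: "L1 \<in> {L1..L2}" using A(1) by simp
  have "isogeodesic r N P L1 L2 T1 T2 Q1 Q2 t0 q0 \<longleftrightarrow> R"
    unfolding isogeodesic_def using key ne by blast
  then show ?thesis unfolding P_def R_def Ut_def Vt_def Wt_def Xt_def Uq_def Vq_def Wq_def Xq_def .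
qed

end
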